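(* Let $\beta_*>0$ be the unique positive solution of $I_2(\beta)=\frac12I_1(\beta)$. If $0<\beta\le\beta_*$, then $$I_\ell(\beta)\le\frac{I_1(\beta)}{\ell}\qquad\text{for all integers }\ell\ge1,$$ and the inequality is strict for every $\ell\ge3$.
   Context: $I_\ell$ denotes the $\ell$-th modified Bessel function of the first kind, $I_\ell(\beta)=\sum_{k\ge0}\frac{1}{k!(k+\ell)!}(\beta/2)^{2k+\ell}$. *)

theory Defs
  imports Complex_Main
begin

definition besselI :: "nat \<Rightarrow> real \<Rightarrow> real" where
  "besselI l \<beta> = (\<Sum>k. (\<beta> / 2) ^ (2 * k + l) / (fact k * fact (k + l)))"

end

theory Submission
  imports Defs
begin

definition tt :: "nat \<Rightarrow> real \<Rightarrow> nat \<Rightarrow> real" where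
  "tt l b k = (b/2)^(2*k+l)/(fact k * fact (k+l))"

lemma bI: "besselI l b = suminf (tt l b)"
  by (simp add: besselI_def tt_def[abs_def])

lemma pcoef_summable: "summable (\<lambda>k. inverse (fact k * fact (k+l)) * (y::real)^k)"
proof (rule summable_comparison_test'[OF summable_exp[of "\<bar>y\<bar>"]])
  fix k :: nat
  have "fact (k+l) \<ge> (1::real)" by simp
  hence "inverse (fact k * fact (k+l)) \<le> inverse (fact k :: real)"
    by (simp add: field_simps)
  thus "norm (inverse (fact k * fact (k+l)) * y^k) \<le> inverse (fact k) * \<bar>y\<bar>^k"
    by (simp add: abs_mult power_abs mult_right_mono)
qed

lemma tt_eq: "tt l b k = (b/2)^l * (inverse (fact k * fact (k+l)) * ((b/2)^2)^k)"
proof -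
  have "(b/2)^(2*k+l) = (b/2)^l * ((b/2)^2)^k"
    by (subst power_add, subst power_mult, rule mult.commute)
  thus ?thesis unfolding tt_def by (simp only: divide_inverse mult.assoc, simp only: ac_simps)
qed

lemma summable_tt: "summable (tt l b)"
  unfolding tt_eq by (intro summable_mult pcoef_summable)

lemma bI_eq: "besselI l b = (b/2)^l * (\<Sum>k. inverse (fact k * fact (k+l)) * ((b/2)^2)^k)"
  unfolding bI tt_eq by (rule suminf_mult, rule pcoef_summable)

lemma isCont_bI: "isCont (besselI l) b"
proof -
  have c: "isCont (\<lambda>y. \<Sum>k. inverse (fact k * fact (k+l)) * (y::real)^k) y" for y
    by (rule isCont_powser_converges_everywhere, rule pcoef_summable)
  have "isCont (\<lambda>b. (b/2)^l * (\<Sum>k. inverse (fact k * fact (k+l)) * ((b/2)^2)^k)) b"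
  proof -
    have "isCont (\<lambda>b::real. (b/2)^2) b" by (intro continuous_intros) auto
    hence "isCont (\<lambda>b. (\<Sum>k. inverse (fact k * fact (k+l)) * ((b/2)^2)^k)) b"
      using isCont_o2 c by blast
    moreover have "isCont (\<lambda>b::real. (b/2)^l) b" by (intro continuous_intros) auto
    ultimately show ?thesis by (intro isCont_mult)
  qed
  thus ?thesis by (simp add: bI_eq[abs_def])
qed

lemma tt_Suc: "tt (Suc l) b k = tt l b k * ((b/2)/(k+l+1))"
proof -
  have "fact (k + Suc l) = (real (k+l+1)) * (fact (k+l) :: real)"
    by (simp add: fact_Suc)
  thus ?thesis unfolding tt_def by (simp add: field_simps)
qed

lemma tt_Suc_k: "tt l b (Suc k) = tt l b k * ((b/2)^2/((k+1)*(k+l+1)))"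
proof -
  have "fact (Suc k + l) = (real (k+l+1)) * (fact (k+l) :: real)"
    by (simp add: fact_Suc)
  moreover have "fact (Suc k) = (real (k+1)) * (fact k :: real)"
    by (simp add: fact_Suc)
  moreover have "(b/2)^(2 * Suc k + l) = (b/2)^(2*k+l) * (b/2)^2"
    by (subst power_add[symmetric]) (simp add: algebra_simps)
  ultimately show ?thesis unfolding tt_def by (simp add: field_simps)
qed

lemma tt_pos: "b > 0 \<Longrightarrow> tt l b k > 0"
  unfolding tt_def by simp

lemma tt_nonneg: "b \<ge> 0 \<Longrightarrow> tt l b k \<ge> 0"
  unfolding tt_def by simp

lemma bI_pos: "b > 0 \<Longrightarrow> besselI l b > 0"
  unfolding bI by (rule suminf_pos[OF summable_tt tt_pos])

lemma bI_nonneg: "b \<ge> 0 \<Longrightarrow> besselI l b \<ge> 0"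
  unfolding bI by (rule suminf_nonneg[OF summable_tt tt_nonneg])

lemma small_pos:
  assumes "0 < b" "b \<le> 1" shows "besselI 2 b < besselI 1 b / 2"
proof -
  have s1: "summable (\<lambda>k. tt 1 b k / 2)" by (intro summable_divide summable_tt)
  have "besselI 1 b / 2 - besselI 2 b = (\<Sum>k. tt 1 b k / 2 - tt 2 b k)"
    unfolding bI by (simp only: suminf_diff[OF s1 summable_tt, symmetric] suminf_divide[OF summable_tt])
  also have "\<dots> > 0"
  proof (rule suminf_pos)
    show "summable (\<lambda>k. tt 1 b k / 2 - tt 2 b k)" by (intro summable_diff s1 summable_tt)
    fix k
    have e: "tt 2 b k = tt 1 b k * ((b/2)/(k+2))"
      using tt_Suc[of 1 b k] by (simp add: numeral_2_eq_2 add.commute)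
    have p: "tt 1 b k > 0" using tt_pos assms by simp
    have "(b/2)/(k+2) < 1/2" using assms by (simp add: field_simps)
    hence "tt 1 b k * ((b/2)/(k+2)) < tt 1 b k * (1/2)" using p by (intro mult_strict_left_mono)
    thus "tt 1 b k / 2 - tt 2 b k > 0" using e by simp
  qed
  finally show ?thesis by simp
qed

lemma rec_bound:
  assumes "b \<ge> 0" shows "besselI (Suc l) b \<le> (b/2)/(l+1) * besselI l b"
proof -
  have "besselI (Suc l) b \<le> (\<Sum>k. (b/2)/(l+1) * tt l b k)"
    unfolding bI
  proof (rule suminf_le)
    fix k
    have d: "(b/2)/(k+l+1) \<le> (b/2)/(l+1)" using assms by (intro divide_left_mono) auto
    show "tt (Suc l) b k \<le> (b/2)/(l+1) * tt l b k"
      unfolding tt_Suc using mult_left_mono[OF d tt_nonneg[OF assms, of l k]]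
      by (metis mult.commute)
  qed (intro summable_mult summable_tt)+
  also have "\<dots> = (b/2)/(l+1) * besselI l b"
    unfolding bI by (rule suminf_mult[OF summable_tt])
  finally show ?thesis .
qed

lemma iter_bound:
  assumes "b \<ge> 0" shows "besselI (m+2) b \<le> (b/2)^m * 2 / fact (m+2) * besselI 2 b"
proof (induction m)
  case 0 then show ?case by (simp add: eval_nat_numeral)
next
  case (Suc m)
  have "besselI (Suc m + 2) b \<le> (b/2)/(m+3) * besselI (m+2) b"
    using rec_bound[OF assms, of "m+2"] by (simp add: add.commute)
  also have "\<dots> \<le> (b/2)/(m+3) * ((b/2)^m * 2 / fact (m+2) * besselI 2 b)"
    using Suc assms by (intro mult_left_mono) auto
  also have "\<dots> = (b/2)^(Suc m) * 2 / fact (Suc m + 2) * besselI 2 b"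
  proof -
    have f: "fact (Suc m + 2) = (real m + 3) * (fact (m+2) :: real)"
      by (simp add: add.commute)
    have g: "x/c * (y*2/F*I) = (x*y)*2/(c*F)*I" if "c \<noteq> 0" "F \<noteq> 0" for x y c F I :: real
      using that by (simp add: field_simps)
    have "(real m + 3) \<noteq> 0" "(fact (m+2) :: real) \<noteq> 0" by auto
    from g[OF this, of "b/2" "(b/2)^m" "besselI 2 b"] show ?thesis
      unfolding f power_Suc by (simp add: add.commute)
  qed
  finally show ?case .
qed

lemma pow2_fact: "(2::real)^m \<le> fact (m+1)"
proof (induction m)
  case 0 then show ?case by simp
next
  case (Suc m)
  have "(2::real)^Suc m = 2 * 2^m" by simp
  also have "\<dots> \<le> (real m+2) * (fact (m+1) :: real)" using Suc by (intro mult_mono) auto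
  also have "\<dots> = fact (Suc m + 1)" by (simp add: fact_Suc)
  finally show ?case .
qed

lemma F4: "besselI 2 4 > besselI 1 4 / 2"
proof -
  define h where "h k = tt 1 4 k / 2 - tt 2 4 k" for k
  have s1: "summable (\<lambda>k. tt 1 4 k / 2)" by (intro summable_divide summable_tt)
  have sh: "summable h" unfolding h_def by (intro summable_diff s1 summable_tt)
  have e: "besselI 1 4 / 2 - besselI 2 4 = suminf h"
    unfolding bI h_def by (simp only: suminf_diff[OF s1 summable_tt, symmetric] suminf_divide[OF summable_tt])
  have sp: "suminf h = (\<Sum>k. h (k+3)) + sum h {..<3}"
    by (rule suminf_split_initial_segment[OF sh])
  have geo: "tt 1 4 (k+3) \<le> 8/9 * (1/5)^k" for k
  proof (induction k)
    case 0 show ?case by (simp add: tt_def eval_nat_numeral)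
  next
    case (Suc k)
    have "tt 1 4 (Suc k + 3) = tt 1 4 (k+3) * ((4/2)^2/((real (k+3)+1)*(real (k+3)+1+1)))"
      using tt_Suc_k[of 1 4 "k+3"] by simp
    also have "\<dots> \<le> tt 1 4 (k+3) * (1/5)"
    proof (rule mult_left_mono)
      show "0 \<le> tt 1 4 (k+3)" by (rule tt_nonneg) simp
      have "(20::real) \<le> (real (k+3)+1)*(real (k+3)+1+1)"
        by (simp add: algebra_simps)
      hence "4/((real (k+3)+1)*(real (k+3)+1+1)) \<le> 4/(20::real)"
        by (intro divide_left_mono) auto
      thus "(4/2)^2/((real (k+3)+1)*(real (k+3)+1+1)) \<le> (1/5::real)"
        by simp
    qed
    also have "\<dots> \<le> 8/9 * (1/5)^k * (1/5)" using Suc by simp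
    finally show ?case by simp
  qed
  have hk: "h (k+3) \<le> 4/9 * (1/5)^k" for k
    using geo[of k] tt_nonneg[of 4 2 "k+3"] unfolding h_def by simp
  have sg: "summable (\<lambda>k. 4/9 * (1/5::real)^k)" by (intro summable_mult summable_geometric) simp
  have "(\<Sum>k. h (k+3)) \<le> (\<Sum>k. 4/9 * (1/5::real)^k)"
    by (rule suminf_le[OF hk summable_ignore_initial_segment[OF sh] sg])
  also have "\<dots> = 4/9 * (1 / (1 - 1/5))"
    by (subst suminf_mult[OF summable_geometric]) (simp_all add: suminf_geometric)
  finally have t: "(\<Sum>k. h (k+3)) \<le> 5/9" by simp
  have "sum h {..<3} = -5/3"
    by (simp add: h_def tt_def eval_nat_numeral lessThan_Suc)
  with e sp t show ?thesis by simp
qed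

theorem lemma3p1:
  fixes \<beta>s \<beta> :: real
  assumes bs_pos: "\<beta>s > 0"
    and bs_sol: "besselI 2 \<beta>s = besselI 1 \<beta>s / 2"
    and bs_unique: "\<And>b. b > 0 \<Longrightarrow> besselI 2 b = besselI 1 b / 2 \<Longrightarrow> b = \<beta>s"
    and \<beta>_pos: "0 < \<beta>" and \<beta>_le: "\<beta> \<le> \<beta>s"
  shows "(\<forall>l::nat. l \<ge> 1 \<longrightarrow> besselI l \<beta> \<le> besselI 1 \<beta> / real l)
       \<and> (\<forall>l::nat. l \<ge> 3 \<longrightarrow> besselI l \<beta> < besselI 1 \<beta> / real l)"
proof -
  define F where "F b = besselI 1 b / 2 - besselI 2 b" for b
  have cF: "\<forall>x. a \<le> x \<and> x \<le> c \<longrightarrow> isCont F x" for a c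
    unfolding F_def[abs_def] by (auto intro!: continuous_intros isCont_bI)
  have F1: "F 1 > 0" using small_pos[of 1] unfolding F_def by simp
  have F4': "F 4 < 0" using F4 unfolding F_def by simp
  obtain c where c: "1 \<le> c" "c \<le> 4" "F c = 0"
    using IVT2[of F 4 0 1, OF _ _ _ cF] F1 F4' by force
  have "c = \<beta>s" using c by (intro bs_unique) (auto simp: F_def)
  moreover have "c \<noteq> 4" using c F4' by auto
  ultimately have bs4: "\<beta>s < 4" using c by simp
  have Fb: "F \<beta> \<ge> 0"
  proof (rule ccontr)
    assume neg: "\<not> F \<beta> \<ge> 0"
    have "\<beta> > 1"
    proof (rule ccontr)
      assume "\<not> \<beta> > 1"
      thus False using small_pos[of \<beta>] \<beta>_pos neg unfolding F_def by simp
    qed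
    then obtain d where d: "1 \<le> d" "d \<le> \<beta>" "F d = 0"
      using IVT2[of F \<beta> 0 1, OF _ _ _ cF] F1 neg by force
    have "d = \<beta>s" using d by (intro bs_unique) (auto simp: F_def)
    hence "\<beta> = \<beta>s" using d \<beta>_le by simp
    thus False using neg bs_sol unfolding F_def by simp
  qed
  have I1pos: "besselI 1 \<beta> > 0" by (rule bI_pos[OF \<beta>_pos])
  have strict: "besselI l \<beta> < besselI 1 \<beta> / real l" if "l \<ge> 3" for l :: nat
  proof -
    define m where "m = l - 2"
    have m: "l = m + 2" "m \<ge> 1" using \<open>l \<ge> 3\<close> unfolding m_def by auto
    have x: "0 \<le> \<beta>/2" "\<beta>/2 < 2" using \<beta>_pos \<beta>_le bs4 by auto
    have "(\<beta>/2)^m < 2^m" using x m by (intro power_strict_mono) auto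
    also have "\<dots> \<le> fact (m+1)" by (rule pow2_fact)
    finally have xm: "(\<beta>/2)^m < fact (m+1)" .
    have "besselI l \<beta> \<le> (\<beta>/2)^m * 2 / fact (m+2) * besselI 2 \<beta>"
      unfolding m(1) by (rule iter_bound) (use \<beta>_pos in simp)
    also have "\<dots> \<le> (\<beta>/2)^m * 2 / fact (m+2) * (besselI 1 \<beta> / 2)"
      using Fb x unfolding F_def by (intro mult_left_mono) auto
    also have "\<dots> = (\<beta>/2)^m / fact (m+2) * besselI 1 \<beta>" by simp
    also have "\<dots> < fact (m+1) / fact (m+2) * besselI 1 \<beta>"
      using xm I1pos by (intro mult_strict_right_mono divide_strict_right_mono) auto
    also have "fact (m+1) / fact (m+2) = (1::real) / real l"
    proof -
      have f: "(fact (m+2)::real) = (real m + 2) * fact (m+1)"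
        using fact_Suc[of "m+1", where 'a=real] by simp
      have "(fact (m+1)::real) \<noteq> 0" by simp
      have g: "A / (c * A) = 1 / c" if "A \<noteq> 0" for A c :: real using that by simp
      have "real l = real m + 2" using m(1) by simp
      thus ?thesis unfolding f using g[OF \<open>(fact (m+1)::real) \<noteq> 0\<close>] by presburger
    qed
    finally show ?thesis by simp
  qed
  show ?thesis
  proof (intro conjI allI impI)
    fix l :: nat assume "l \<ge> 1"
    then consider "l = 1" | "l = 2" | "l \<ge> 3" by linarith
    thus "besselI l \<beta> \<le> besselI 1 \<beta> / real l"
    proof cases
      case 1 thus ?thesis by simp
    next
      case 2 thus ?thesis using Fb unfolding F_def by simp
    next
      case 3 thus ?thesis using strict[OF 3] by simp
    qed
  next
    fix l :: nat assume "l \<ge> 3" thus "besselI l \<beta> < besselI 1 \<beta> / real l" by (rule strict)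
  qed
qed

end
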